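(* Let $Y_1,Y_2,\ldots$ be i.i.d. Bernoulli$(1/2)$ and let $(Z^k)_k$ be generated by the bit-drop scheme described in the context, independently of $(Y_i)$. For integers $l\ge 1,k\ge 0$ let $L^a_l(k)$ be the length of a longest common subsequence of $Z^k$ and $Y_1\ldots Y_l$. Let $\delta:\mathbb{R}\to\mathbb{R}$ be a function with $\lim_{\epsilon\to0}\delta(\epsilon)=0$ such that for every $\epsilon>0$ there exist $c,C>0$ with $P\big(L^a_l(\lfloor 2l(1-\delta(\epsilon))\rfloor)>l(1-\epsilon)\big)\le Ce^{-cl}$ for all $l>0$. Let $\epsilon>0$ be such that $$\frac{0.5}{1-\delta(\epsilon)}<0.65.$$ Define $E^n_3:=\bigcap_{l=\lceil0.2n\rceil}^n\{L^a_l(\lfloor 2l(1-\delta(\epsilon))\rfloor)\le(1-\epsilon)l\}$, $E^n_{4k}:=\{L^a_n(k)\ge 0.65k\}$, $E^n_4:=\bigcap_{k=\lceil 0.45n\rceil}^n E^n_{4k}$, and $$E^n_{6k}:=\{L^a_n(k)\leq(1-\epsilon)\,\eta(L^a_n(k))\ \text{for all }(\pi,\eta)\in M^k\},\qquad E^n_6:=\bigcap_{k=\lceil0.45n\rceil}^nE^n_{6k}.$$ Then for all $k>0.45n$ (with $k\le n$), $E^n_3\cap E^n_{4k}\subset E^n_{6k}$, and consequently $E^n_3\cap E^n_4\subset E^n_6$.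
   Context: Bit-drop scheme: let $V_1,V_2,\ldots$ be i.i.d. Bernoulli$(1/2)$ and let $T_3,T_4,\ldots$ be independent, independent of $(V_k)$, with $T_{k+1}$ uniform on $\{2,\ldots,k\}$. Set $Z^2:=V_1V_2$ and, given $Z^k=Z^k_1\ldots Z^k_k$, define $Z^{k+1}_j:=Z^k_j$ for $j<T_{k+1}$, $Z^{k+1}_{T_{k+1}}:=V_{k+1}$, $Z^{k+1}_j:=Z^k_{j-1}$ for $T_{k+1}<j\le k+1$. A pair of matching subsequences of $Z^k$ and $Y_1\ldots Y_n$ of length $m$ is a pair $(\pi,\eta)$ of strictly increasing maps $\pi:\{1,\ldots,m\}\to\{1,\ldots,k\}$, $\eta:\{1,\ldots,m\}\to\{1,\ldots,n\}$ with $Z^k_{\pi(i)}=Y_{\eta(i)}$ for all $i$. Let $M^k_2$ be the set of such pairs of maximal length (length $L^a_n(k)$). Order pairs of the same length componentwise: $(\pi_1,\eta_1)\le(\pi_2,\eta_2)$ iff $\pi_1(i)\le\pi_2(i)$ and $\eta_1(i)\le\eta_2(i)$ for all $i$. Let $M^k\subset M^k_2$ be the set of minimal elements of $M^k_2$ for this partial order. *)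

theory Defs
  imports "HOL-Probability.Probability"
begin

text \<open>Index type for the underlying random variables:
  IV i = V_i (i >= 1), IT k = T_k (k >= 3), IY i = Y_i (i >= 1). All take values in nat
  (bits are 0/1).\<close>
datatype idx = IV nat | IT nat | IY nat

fun bitdrop :: "(nat \<Rightarrow> nat) \<Rightarrow> (nat \<Rightarrow> nat) \<Rightarrow> nat \<Rightarrow> nat list" where
  "bitdrop V T k =
     (if k \<le> 2 then map V [1..<k+1]
      else (let Z = bitdrop V T (k - 1); t = T k
            in take (t - 1) Z @ V k # drop (t - 1) Z))"

definition is_match :: "nat list \<Rightarrow> nat list \<Rightarrow> nat \<Rightarrow> (nat \<Rightarrow> nat) \<Rightarrow> (nat \<Rightarrow> nat) \<Rightarrow> bool" where
  "is_match xs ys m \<pi> \<eta> \<longleftrightarrow>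
     strict_mono_on {1..m} \<pi> \<and> strict_mono_on {1..m} \<eta> \<and>
     \<pi> ` {1..m} \<subseteq> {1..length xs} \<and> \<eta> ` {1..m} \<subseteq> {1..length ys} \<and>
     (\<forall>i\<in>{1..m}. xs ! (\<pi> i - 1) = ys ! (\<eta> i - 1))"

definition lcs_len :: "nat list \<Rightarrow> nat list \<Rightarrow> nat" where
  "lcs_len xs ys = Max {m. \<exists>\<pi> \<eta>. is_match xs ys m \<pi> \<eta>}"

text \<open>M_2: matching pairs of maximal length; M: its minimal elements for the
  componentwise order (compared on the domain {1..m}).\<close>
definition M2 :: "nat list \<Rightarrow> nat list \<Rightarrow> ((nat \<Rightarrow> nat) \<times> (nat \<Rightarrow> nat)) set" where
  "M2 xs ys = {(\<pi>, \<eta>). is_match xs ys (lcs_len xs ys) \<pi> \<eta>}"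

definition pair_le :: "nat \<Rightarrow> (nat \<Rightarrow> nat) \<times> (nat \<Rightarrow> nat) \<Rightarrow> (nat \<Rightarrow> nat) \<times> (nat \<Rightarrow> nat) \<Rightarrow> bool" where
  "pair_le m p q \<longleftrightarrow> (\<forall>i\<in>{1..m}. fst p i \<le> fst q i \<and> snd p i \<le> snd q i)"

definition Mmin :: "nat list \<Rightarrow> nat list \<Rightarrow> ((nat \<Rightarrow> nat) \<times> (nat \<Rightarrow> nat)) set" where
  "Mmin xs ys = {p \<in> M2 xs ys. \<not> (\<exists>q\<in>M2 xs ys. pair_le (lcs_len xs ys) q p \<and>
                                          \<not> pair_le (lcs_len xs ys) p q)}"

definition Zk :: "(idx \<Rightarrow> 'a \<Rightarrow> nat) \<Rightarrow> 'a \<Rightarrow> nat \<Rightarrow> nat list" where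
  "Zk R \<omega> k = bitdrop (\<lambda>i. R (IV i) \<omega>) (\<lambda>i. R (IT i) \<omega>) k"

definition Yw :: "(idx \<Rightarrow> 'a \<Rightarrow> nat) \<Rightarrow> 'a \<Rightarrow> nat \<Rightarrow> nat list" where
  "Yw R \<omega> l = map (\<lambda>i. R (IY i) \<omega>) [1..<l+1]"

definition La :: "(idx \<Rightarrow> 'a \<Rightarrow> nat) \<Rightarrow> 'a \<Rightarrow> nat \<Rightarrow> nat \<Rightarrow> nat" where
  "La R \<omega> l k = lcs_len (Zk R \<omega> k) (Yw R \<omega> l)"

definition E3 :: "'a measure \<Rightarrow> (idx \<Rightarrow> 'a \<Rightarrow> nat) \<Rightarrow> real \<Rightarrow> real \<Rightarrow> nat \<Rightarrow> 'a set" where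
  "E3 M R d \<epsilon> n = {\<omega> \<in> space M. \<forall>l. nat \<lceil>0.2 * real n\<rceil> \<le> l \<and> l \<le> n \<longrightarrow>
      real (La R \<omega> l (nat \<lfloor>2 * real l * (1 - d)\<rfloor>)) \<le> (1 - \<epsilon>) * real l}"

definition E4k :: "'a measure \<Rightarrow> (idx \<Rightarrow> 'a \<Rightarrow> nat) \<Rightarrow> nat \<Rightarrow> nat \<Rightarrow> 'a set" where
  "E4k M R n k = {\<omega> \<in> space M. real (La R \<omega> n k) \<ge> 0.65 * real k}"

definition E4 :: "'a measure \<Rightarrow> (idx \<Rightarrow> 'a \<Rightarrow> nat) \<Rightarrow> nat \<Rightarrow> 'a set" where
  "E4 M R n = space M \<inter> (\<Inter>k\<in>{nat \<lceil>0.45 * real n\<rceil>..n}. E4k M R n k)"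

definition E6k :: "'a measure \<Rightarrow> (idx \<Rightarrow> 'a \<Rightarrow> nat) \<Rightarrow> real \<Rightarrow> nat \<Rightarrow> nat \<Rightarrow> 'a set" where
  "E6k M R \<epsilon> n k = {\<omega> \<in> space M. \<forall>(\<pi>, \<eta>) \<in> Mmin (Zk R \<omega> k) (Yw R \<omega> n).
      real (La R \<omega> n k) \<le> (1 - \<epsilon>) * real (\<eta> (La R \<omega> n k))}"

definition E6 :: "'a measure \<Rightarrow> (idx \<Rightarrow> 'a \<Rightarrow> nat) \<Rightarrow> real \<Rightarrow> nat \<Rightarrow> 'a set" where
  "E6 M R \<epsilon> n = space M \<inter> (\<Inter>k\<in>{nat \<lceil>0.45 * real n\<rceil>..n}. E6k M R \<epsilon> n k)"

definition used_idx :: "idx set" where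
  "used_idx = {IV i | i. i \<ge> 1} \<union> {IT k | k. k \<ge> 3} \<union> {IY i | i. i \<ge> 1}"

end

theory Submission
  imports Defs
begin

declare bitdrop.simps[simp del]

lemma match_card_le:
  fixes m b :: nat and f :: "nat \<Rightarrow> nat"
  assumes "strict_mono_on {1..m} f" "f ` {1..m} \<subseteq> {1..b}"
  shows "m \<le> b"
proof -
  have "inj_on f {1..m}" using assms(1) by (rule strict_mono_on_imp_inj_on)
  then have "card (f ` {1..m}) = m" by (simp add: card_image)
  moreover have "card (f ` {1..m}) \<le> card {1..b}" using assms(2) by (intro card_mono) auto
  ultimately show ?thesis by simp
qed

lemma match_len: "is_match xs ys m \<pi> \<eta> \<Longrightarrow> m \<le> length xs"
  unfolding is_match_def by (elim conjE) (rule match_card_le)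

lemma eta_range:
  assumes "is_match xs ys m \<pi> \<eta>"
  shows "\<eta> ` {1..m} \<subseteq> {1..\<eta> m}"
proof
  fix y assume "y \<in> \<eta> ` {1..m}"
  then obtain i where i: "i \<in> {1..m}" "y = \<eta> i" by auto
  have "\<eta> ` {1..m} \<subseteq> {1..length ys}" using assms unfolding is_match_def by (elim conjE)
  then have "\<eta> i \<in> {1..length ys}" using i by blast
  then have "\<eta> i \<ge> 1" by simp
  moreover have sm: "strict_mono_on {1..m} \<eta>" using assms unfolding is_match_def by (elim conjE)
  moreover have "\<eta> i \<le> \<eta> m"
  proof (cases "i = m")
    case False
    then have "i < m" "m \<in> {1..m}" using i by auto
    then show ?thesis using strict_mono_onD[OF sm i(1)] by fastforce
  qed simp
  ultimately show "y \<in> {1..\<eta> m}" using i by auto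
qed

lemma eta_ge:
  assumes "is_match xs ys m \<pi> \<eta>" shows "m \<le> \<eta> m"
proof -
  have "strict_mono_on {1..m} \<eta>" using assms unfolding is_match_def by simp
  then show ?thesis using match_card_le eta_range[OF assms] by blast
qed

lemma lcs_ge:
  assumes "is_match xs ys m \<pi> \<eta>"
  shows "m \<le> lcs_len xs ys"
proof -
  have "{m. \<exists>\<pi> \<eta>. is_match xs ys m \<pi> \<eta>} \<subseteq> {0..length xs}" using match_len by auto
  then have "finite {m. \<exists>\<pi> \<eta>. is_match xs ys m \<pi> \<eta>}" using finite_subset by blast
  then show ?thesis unfolding lcs_len_def using assms by (intro Max_ge) auto
qed

lemma match_take:
  assumes "is_match xs ys m \<pi> \<eta>" "\<eta> m \<le> l"
  shows "is_match xs (take l ys) m \<pi> \<eta>"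
proof -
  have r: "\<eta> ` {1..m} \<subseteq> {1..\<eta> m}" using eta_range[OF assms(1)] .
  show ?thesis using assms(1) unfolding is_match_def
  proof (intro conjI ballI; (elim conjE)?)
    fix i assume "i \<in> {1..m}" and h: "\<forall>i\<in>{1..m}. xs ! (\<pi> i - 1) = ys ! (\<eta> i - 1)"
      and rr: "\<eta> ` {1..m} \<subseteq> {1..length ys}"
    then have "\<eta> i \<le> l" "\<eta> i \<ge> 1" using r assms(2) by force+
    then show "xs ! (\<pi> i - 1) = take l ys ! (\<eta> i - 1)" using h \<open>i \<in> {1..m}\<close> by simp
  next
    assume "\<eta> ` {1..m} \<subseteq> {1..length ys}"
    then show "\<eta> ` {1..m} \<subseteq> {1..length (take l ys)}" using r assms(2) by force
  qed auto
qed

lemma match_ins: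
  assumes "is_match xs ys m \<pi> \<eta>"
  shows "is_match (take a xs @ x # drop a xs) ys m (\<lambda>i. if \<pi> i \<le> a then \<pi> i else Suc (\<pi> i)) \<eta>"
proof -
  let ?s = "\<lambda>p::nat. if p \<le> a then p else Suc p"
  have sm: "strict_mono ?s" unfolding strict_mono_def by auto
  have idx: "(take a xs @ x # drop a xs) ! (?s p - 1) = xs ! (p - 1)" if "1 \<le> p" "p \<le> length xs" for p
  proof (cases "p \<le> a")
    case True
    then have "p - 1 < length (take a xs)" using that by (cases p) auto
    then show ?thesis using True by (simp add: nth_append)
  next
    case False
    then have "a < length xs" using that by simp
    then have "length (take a xs) = a" by simp
    moreover have "Suc p - 1 - a = Suc (p - 1 - a)" using False by simp
    ultimately show ?thesis using False that by (simp add: nth_append)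
  qed
  show ?thesis using assms unfolding is_match_def
  proof (elim conjE, intro conjI ballI)
    assume "strict_mono_on {1..m} \<pi>"
    show "strict_mono_on {1..m} (\<lambda>i. if \<pi> i \<le> a then \<pi> i else Suc (\<pi> i))"
    proof (rule strict_mono_onI)
      fix r s assume "r \<in> {1..m}" "s \<in> {1..m}" "r < s"
      then have "\<pi> r < \<pi> s" using \<open>strict_mono_on {1..m} \<pi>\<close> by (simp add: strict_mono_onD)
      then show "(if \<pi> r \<le> a then \<pi> r else Suc (\<pi> r)) < (if \<pi> s \<le> a then \<pi> s else Suc (\<pi> s))"
        using strict_monoD[OF sm] by simp
    qed
  next
    assume "\<pi> ` {1..m} \<subseteq> {1..length xs}"
    then show "(\<lambda>i. if \<pi> i \<le> a then \<pi> i else Suc (\<pi> i)) ` {1..m} \<subseteq> {1..length (take a xs @ x # drop a xs)}"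
      by force
  next
    fix i assume "i \<in> {1..m}" "\<pi> ` {1..m} \<subseteq> {1..length xs}"
      "\<forall>i\<in>{1..m}. xs ! (\<pi> i - 1) = ys ! (\<eta> i - 1)"
    then show "(take a xs @ x # drop a xs) ! ((if \<pi> i \<le> a then \<pi> i else Suc (\<pi> i)) - 1) = ys ! (\<eta> i - 1)"
      using idx[of "\<pi> i"] by force
  qed
qed

lemma bitdrop_len: "length (bitdrop V T k) = k"
proof (induction k)
  case 0
  then show ?case by (subst bitdrop.simps) simp
next
  case (Suc k)
  then show ?case by (subst bitdrop.simps) (auto simp: Let_def min_def)
qed

lemma bitdrop_Suc: "\<exists>a. bitdrop V T (Suc k) = take a (bitdrop V T k) @ V (Suc k) # drop a (bitdrop V T k)"
proof (cases "Suc k \<le> 2")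
  case True
  then have "bitdrop V T (Suc k) = map V [1..<Suc k + 1]" by (subst bitdrop.simps) simp
  also have "\<dots> = bitdrop V T k @ [V (Suc k)]" using True by (subst bitdrop.simps) simp
  finally have "bitdrop V T (Suc k) = take k (bitdrop V T k) @ V (Suc k) # drop k (bitdrop V T k)"
    using bitdrop_len[of V T k] by simp
  then show ?thesis by blast
next
  case False
  then show ?thesis by (subst bitdrop.simps) (auto simp: Let_def)
qed

lemma bitdrop_mono:
  assumes "k \<le> k'" "is_match (bitdrop V T k) ys m \<pi> \<eta>"
  shows "\<exists>\<pi>'. is_match (bitdrop V T k') ys m \<pi>' \<eta>"
  using assms(1)
proof (induction k' rule: dec_induct)
  case base then show ?case using assms(2) by blast
next
  case (step j)
  then obtain \<pi>' where "is_match (bitdrop V T j) ys m \<pi>' \<eta>" by blast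
  moreover obtain a where "bitdrop V T (Suc j) = take a (bitdrop V T j) @ V (Suc j) # drop a (bitdrop V T j)"
    using bitdrop_Suc by blast
  ultimately show ?case using match_ins by metis
qed

lemma Yw_take: "l \<le> n \<Longrightarrow> Yw R \<omega> l = take l (Yw R \<omega> n)"
  unfolding Yw_def take_map by (simp add: take_upt del: upt_Suc)

lemma length_Yw: "length (Yw R \<omega> n) = n"
  by (simp add: Yw_def)

lemma main:
  fixes d \<epsilon> :: real
  assumes "d < 1" "0.5 / (1 - d) < (0.65::real)" "0.45 * real n \<le> real k" "0 < k" "k \<le> n"
  shows "E3 M R d \<epsilon> n \<inter> E4k M R n k \<subseteq> E6k M R \<epsilon> n k"
proof
  fix \<omega> assume w: "\<omega> \<in> E3 M R d \<epsilon> n \<inter> E4k M R n k"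
  define L where "L = La R \<omega> n k"
  have L65: "real L \<ge> 0.65 * real k" using w unfolding E4k_def L_def by auto
  have dd: "0.5 < 0.65 * (1 - d)" using assms(1,2) by (simp add: field_simps)
  show "\<omega> \<in> E6k M R \<epsilon> n k" unfolding E6k_def
  proof (safe)
    show "\<omega> \<in> space M" using w unfolding E4k_def by auto
  next
    fix \<pi> \<eta> assume "(\<pi>, \<eta>) \<in> Mmin (Zk R \<omega> k) (Yw R \<omega> n)"
    then have m: "is_match (Zk R \<omega> k) (Yw R \<omega> n) L \<pi> \<eta>"
      unfolding Mmin_def M2_def L_def La_def by auto
    define l where "l = \<eta> L"
    have Lpos: "L \<ge> 1" using L65 assms(4) by (cases L) auto
    have "\<eta> ` {1..L} \<subseteq> {1..length (Yw R \<omega> n)}" using m unfolding is_match_def by (elim conjE)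
    then have "\<eta> L \<in> {1..n}" using Lpos unfolding length_Yw by (auto simp: image_subset_iff)
    then have "l \<le> n" unfolding l_def by simp
    have Ll: "L \<le> l" using eta_ge[OF m] l_def by simp
    define k' where "k' = nat \<lfloor>2 * real l * (1 - d)\<rfloor>"
    have "real k < 2 * real l * (1 - d)"
    proof -
      have "2 * real l * (1 - d) \<ge> 2 * real L * (1 - d)" using Ll assms(1) by (simp add: mult_right_mono)
      moreover have "2 * real L * (1 - d) \<ge> 2 * (0.65 * real k) * (1 - d)"
        using L65 assms(1) by (simp add: mult_right_mono)
      moreover have "2 * (0.65 * real k) * (1 - d) > real k"
      proof -
        have "real k * 1 < real k * (2 * (0.65 * (1 - d)))"
          using dd assms(4) by (intro mult_strict_left_mono) auto
        moreover have "2 * (0.65 * real k) * (1 - d) = real k * (2 * (0.65 * (1 - d)))" by simp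
        ultimately show ?thesis by linarith
      qed
      ultimately show ?thesis by linarith
    qed
    then have "real k \<le> 2 * real l * (1 - d)" by (rule less_imp_le)
    then have "int k \<le> \<lfloor>2 * real l * (1 - d)\<rfloor>" by (simp add: le_floor_iff)
    then have "k \<le> k'" unfolding k'_def by (simp add: le_nat_iff)
    have m2: "is_match (Zk R \<omega> k) (Yw R \<omega> l) L \<pi> \<eta>"
      unfolding Yw_take[OF \<open>l \<le> n\<close>] using match_take[OF m, of l] l_def by simp
    obtain \<pi>' where "is_match (Zk R \<omega> k') (Yw R \<omega> l) L \<pi>' \<eta>"
      using bitdrop_mono[OF \<open>k \<le> k'\<close>] m2 unfolding Zk_def by blast
    then have "L \<le> La R \<omega> l k'" unfolding La_def using lcs_ge by blast
    moreover have "nat \<lceil>0.2 * real n\<rceil> \<le> l"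
    proof -
      have "0.2 * real n \<le> (0.65 * 0.45) * real n" by (intro mult_right_mono) auto
      also have "\<dots> = 0.65 * (0.45 * real n)" by simp
      also have "\<dots> \<le> 0.65 * real k" using assms(3) by (intro mult_left_mono) auto
      also have "\<dots> \<le> real L" by (rule L65)
      also have "\<dots> \<le> real l" using Ll by simp
      finally have "0.2 * real n \<le> real l" .
      then have "\<lceil>0.2 * real n\<rceil> \<le> int l" by (simp add: ceiling_le_iff)
      then show ?thesis by (simp add: nat_le_iff)
    qed
    moreover have "\<forall>l. nat \<lceil>0.2 * real n\<rceil> \<le> l \<and> l \<le> n \<longrightarrow>
      real (La R \<omega> l (nat \<lfloor>2 * real l * (1 - d)\<rfloor>)) \<le> (1 - \<epsilon>) * real l"
      using w unfolding E3_def by blast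
    ultimately have "real (La R \<omega> l k') \<le> (1 - \<epsilon>) * real l"
      using \<open>l \<le> n\<close> unfolding k'_def by blast
    moreover have "real L \<le> real (La R \<omega> l k')" using \<open>L \<le> La R \<omega> l k'\<close> by simp
    ultimately have "real L \<le> (1 - \<epsilon>) * real l" by linarith
    then show "real (La R \<omega> n k) \<le> (1 - \<epsilon>) * real (\<eta> (La R \<omega> n k))"
      using L_def l_def by simp
  qed
qed

theorem lemma9:
  fixes M :: "'a measure" and R :: "idx \<Rightarrow> 'a \<Rightarrow> nat"
    and \<delta> :: "real \<Rightarrow> real" and \<epsilon> :: real and n :: nat
  assumes "prob_space M"
    and "prob_space.indep_vars M (\<lambda>_. count_space UNIV) R used_idx"
    and "\<And>i. i \<ge> 1 \<Longrightarrow> distr M (count_space UNIV) (R (IV i)) = measure_pmf (pmf_of_set {0, 1})"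
    and "\<And>i. i \<ge> 1 \<Longrightarrow> distr M (count_space UNIV) (R (IY i)) = measure_pmf (pmf_of_set {0, 1})"
    and "\<And>k. k \<ge> 3 \<Longrightarrow> distr M (count_space UNIV) (R (IT k)) = measure_pmf (pmf_of_set {2..k - 1})"
    and "(\<delta> \<longlongrightarrow> 0) (at 0)"
    and "\<forall>e>0. \<exists>c>0. \<exists>C>0. \<forall>l::nat>0.
           measure M {\<omega> \<in> space M. real (La R \<omega> l (nat \<lfloor>2 * real l * (1 - \<delta> e)\<rfloor>)) > real l * (1 - e)}
             \<le> C * exp (- c * real l)"
    and "\<epsilon> > 0" and "\<delta> \<epsilon> < 1" and "0.5 / (1 - \<delta> \<epsilon>) < (0.65::real)"
    and "n \<ge> 1"
  shows "(\<forall>k. 0.45 * real n < real k \<and> k \<le> n \<longrightarrow>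
            E3 M R (\<delta> \<epsilon>) \<epsilon> n \<inter> E4k M R n k \<subseteq> E6k M R \<epsilon> n k)
       \<and> E3 M R (\<delta> \<epsilon>) \<epsilon> n \<inter> E4 M R n \<subseteq> E6 M R \<epsilon> n"
proof (intro conjI allI impI)
  fix k assume k: "0.45 * real n < real k \<and> k \<le> n"
  then have k0: "0 < k" by (cases k) auto
  have kn: "k \<le> n" using k by blast
  have a: "0.45 * real n \<le> real k" using k by linarith
  show "E3 M R (\<delta> \<epsilon>) \<epsilon> n \<inter> E4k M R n k \<subseteq> E6k M R \<epsilon> n k"
    by (rule main[OF assms(9) assms(10) a k0 kn])
next
  show "E3 M R (\<delta> \<epsilon>) \<epsilon> n \<inter> E4 M R n \<subseteq> E6 M R \<epsilon> n"
  proof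
    fix \<omega> assume w: "\<omega> \<in> E3 M R (\<delta> \<epsilon>) \<epsilon> n \<inter> E4 M R n"
    have w3: "\<omega> \<in> E3 M R (\<delta> \<epsilon>) \<epsilon> n" using w by blast
    have w4: "\<omega> \<in> E4 M R n" using w by blast
    have sp: "\<omega> \<in> space M" using w4 unfolding E4_def by blast
    have "\<omega> \<in> E6k M R \<epsilon> n k" if k: "k \<in> {nat \<lceil>0.45 * real n\<rceil>..n}" for k
    proof -
      have k1: "nat \<lceil>0.45 * real n\<rceil> \<le> k" and kn: "k \<le> n" using k by auto
      have a: "0.45 * real n \<le> real k" using k1 by linarith
      have k0: "0 < k" using a assms(11) by (cases k) auto
      have "\<omega> \<in> E4k M R n k" using w4 k unfolding E4_def by blast
      then have "\<omega> \<in> E3 M R (\<delta> \<epsilon>) \<epsilon> n \<inter> E4k M R n k" using w3 by blast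
      then show ?thesis by (rule subsetD[OF main[OF assms(9) assms(10) a k0 kn]])
    qed
    then show "\<omega> \<in> E6 M R \<epsilon> n" using sp unfolding E6_def by blast
  qed
qed

end
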